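(* Let $u_*$ be the unique solution in $(0,1)$ of the equation $\ln\frac{1-u}{-\ln u}-1-\frac12\frac{(1+u)\ln u}{1-u}=0$. Then $$F(\delta,u):=u^\delta-\Big(\frac12-\delta\Big)-\Big(\frac12+\delta\Big)u\ge0$$ for all $\delta\in(0,\frac12)$ and all $u\in[u_*,1]$.
   Context: Numerically $u_*=0.00505778\ldots$. *)

theory Defs
  imports Complex_Main
begin

definition ustar_eq :: "real \<Rightarrow> real" where
  "ustar_eq u = ln ((1 - u) / (- ln u)) - 1 - (1/2) * ((1 + u) * ln u / (1 - u))"

definition u_star :: real where
  "u_star = (THE u. 0 < u \<and> u < 1 \<and> ustar_eq u = 0)"

definition F :: "real \<Rightarrow> real \<Rightarrow> real" where
  "F \<delta> u = u powr \<delta> - (1/2 - \<delta>) - (1/2 + \<delta>) * u"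

end

theory Submission
  imports Defs
begin

lemma ln_strict: "0 < (x::real) \<Longrightarrow> x \<noteq> 1 \<Longrightarrow> ln x < x - 1"
  using ln_le_minus_one[of x] ln_eq_minus_one[of x] by fastforce

lemma slope_strict:
  fixes a b d :: real
  assumes "0 < a" "a < b" "b < 1" "0 < d" "d < 1"
  shows "(b powr d - a powr d) * (1 - b) > (1 - b powr d) * (b - a)"
proof -
  have der: "\<And>x. 0 < x \<Longrightarrow> ((\<lambda>z. z powr d) has_real_derivative d * x powr (d - 1)) (at x)"
    by (rule has_real_derivative_powr)
  obtain z1 where z1: "a < z1" "z1 < b" "b powr d - a powr d = (b - a) * (d * z1 powr (d - 1))"
    using MVT2[of a b "\<lambda>z. z powr d" "\<lambda>x. d * x powr (d - 1)"] der assms by force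
  obtain z2 where z2: "b < z2" "z2 < 1" "1 powr d - b powr d = (1 - b) * (d * z2 powr (d - 1))"
    using MVT2[of b 1 "\<lambda>z. z powr d" "\<lambda>x. d * x powr (d - 1)"] der assms by force
  have lt: "z2 powr (d - 1) < z1 powr (d - 1)"
    using powr_less_mono2_neg[of "d - 1" z1 z2] assms z1 z2 by simp
  have "(1 - b powr d) * (b - a) = (1 - b) * (b - a) * (d * z2 powr (d - 1))"
    using z2 by simp
  also have "\<dots> < (1 - b) * (b - a) * (d * z1 powr (d - 1))"
    using lt assms by (intro mult_strict_left_mono) auto
  also have "\<dots> = (b powr d - a powr d) * (1 - b)" using z1 by simp
  finally show ?thesis .
qed

lemma key:
  fixes a b d :: real
  assumes "0 < a" "a < b" "b < 1" "0 < d" "d < 1" "F d a \<ge> 0"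
  shows "F d b > 0"
proof (rule ccontr)
  assume "\<not> F d b > 0"
  hence P: "b powr d \<le> (1/2 - d) + (1/2 + d) * b" unfolding F_def by simp
  have Q: "a powr d \<ge> (1/2 - d) + (1/2 + d) * a" using assms(6) unfolding F_def by simp
  have s: "(b powr d - a powr d) * (1 - b) > (1 - b powr d) * (b - a)"
    using slope_strict assms by blast
  have "(1/2 + d) * (1 - b) = 1/2 + d - b/2 - d*b" "(1/2 + d) * b = b/2 + d*b" by (simp_all add: field_simps)
  hence "1 - b powr d \<ge> (1/2 + d) * (1 - b)" using P by argo
  hence "(1 - b powr d) * (b - a) \<ge> (1/2 + d) * (1 - b) * (b - a)"
    using assms by (intro mult_right_mono) auto
  hence "(b powr d - a powr d) * (1 - b) > ((1/2 + d) * (b - a)) * (1 - b)" using s by argo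
  hence "b powr d - a powr d > (1/2 + d) * (b - a)"
    using assms by (simp add: mult_less_cancel_right)
  thus False using P Q by (simp add: algebra_simps) argo
qed

lemma tangent_eq:
  fixes u :: real
  assumes "0 < u" "u < 1"
  defines "c \<equiv> (1 - u) / (- ln u)"
  shows "F (ln c / ln u) u = (1 - u) / ln u * ustar_eq u"
proof -
  have lu: "ln u < 0" using assms by simp
  have cpos: "c > 0" using divide_pos_neg[of "1-u" "ln u"] lu assms unfolding c_def by simp
  have "u powr (ln c / ln u) = c" using lu cpos assms by (simp add: powr_def)
  hence "F (ln c / ln u) u = c - (1/2 - ln c / ln u) - (1/2 + ln c / ln u) * u"
    unfolding F_def by simp
  also have "\<dots> = (1 - u) / ln u * (ln c - 1 - (1/2) * ((1 + u) * ln u / (1 - u)))"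
    using lu assms unfolding c_def by (simp add: field_simps)
  also have "\<dots> = (1 - u) / ln u * ustar_eq u" unfolding ustar_eq_def c_def ..
  finally show ?thesis .
qed

lemma tangent_ge:
  fixes u d :: real
  assumes "0 < u" "u < 1"
  shows "F d u \<ge> (1 - u) / ln u * ustar_eq u"
proof -
  define c where "c = (1 - u) / (- ln u)"
  define d0 where "d0 = ln c / ln u"
  have lu: "ln u < 0" using assms by simp
  have cpos: "c > 0" using divide_pos_neg[of "1-u" "ln u"] lu assms unfolding c_def by simp
  have e0: "exp (d0 * ln u) = c" using lu cpos unfolding d0_def by simp
  have "exp (d * ln u) \<ge> exp (d0 * ln u) * (1 + (d * ln u - d0 * ln u))"
    using exp_ge_add_one_self[of "d * ln u - d0 * ln u"]
    by (metis exp_diff exp_gt_zero mult.commute pos_le_divide_eq)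
  hence "u powr d \<ge> c * (1 + (d - d0) * ln u)" using e0 assms by (simp add: powr_def algebra_simps)
  also have "c * (1 + (d - d0) * ln u) = c - (1 - u) * (d - d0)"
    using lu unfolding c_def by (simp add: field_simps)
  finally have "u powr d \<ge> c - (1 - u) * (d - d0)" .
  hence "F d u \<ge> F d0 u" unfolding F_def using e0 assms by (simp add: powr_def algebra_simps)
  thus ?thesis using tangent_eq[OF assms] unfolding d0_def c_def by simp
qed

lemma d0_range:
  fixes b :: real
  assumes "0 < b" "b < 1"
  defines "c \<equiv> (1 - b) / (- ln b)"
  shows "0 < ln c / ln b" "ln c / ln b < 1"
proof -
  have lb: "ln b < 0" using assms by simp
  have cpos: "c > 0" using divide_pos_neg[of "1-b" "ln b"] lb assms unfolding c_def by simp
  have "ln b < b - 1" using ln_strict[of b] assms by simp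
  hence "c < 1" using lb pos_divide_less_eq[of "- ln b" "1 - b" 1] unfolding c_def by simp
  hence lc: "ln c < 0" using cpos by simp
  thus "0 < ln c / ln b" using lb by (simp add: divide_neg_neg)
  have "ln (1/b) < 1/b - 1" using ln_strict[of "1/b"] assms by simp
  hence "- ln b < (1 - b) / b" using assms by (simp add: ln_div diff_divide_distrib)
  hence "- ln b * b < 1 - b" using assms by (simp add: less_divide_eq)
  hence "b < c" using lb assms pos_less_divide_eq[of "- ln b" b "1 - b"] unfolding c_def by (simp add: mult.commute)
  hence "ln b < ln c" using assms cpos by simp
  thus "ln c / ln b < 1" using lb by (simp add: neg_divide_less_eq)
qed

lemma no_two_roots:
  fixes a b :: real
  assumes "0 < a" "a < b" "b < 1" "ustar_eq a = 0" "ustar_eq b = 0"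
  shows False
proof -
  define d0 where "d0 = ln ((1 - b) / (- ln b)) / ln b"
  have d: "0 < d0" "d0 < 1" using d0_range[of b] assms unfolding d0_def by auto
  have "F d0 b = 0" using tangent_eq[of b] assms unfolding d0_def by simp
  moreover have "F d0 a \<ge> 0" using tangent_ge[of a d0] assms by simp
  hence "F d0 b > 0" using key[of a b d0] assms d by simp
  ultimately show False by simp
qed

lemma ustar_cont: "0 < x \<Longrightarrow> x < 1 \<Longrightarrow> isCont ustar_eq x"
proof -
  assume x: "0 < x" "x < 1"
  have lx: "ln x < 0" using x by simp
  have cpos: "(1 - x) / (- ln x) > 0" using divide_pos_neg[of "1-x" "ln x"] lx x by simp
  have "isCont (\<lambda>u. ln ((1 - u) / (- ln u)) - 1 - (1/2) * ((1 + u) * ln u / (1 - u))) x"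
    using x lx cpos by (auto intro!: continuous_intros)
  moreover have "ustar_eq = (\<lambda>u. ln ((1 - u) / (- ln u)) - 1 - (1/2) * ((1 + u) * ln u / (1 - u)))"
    by (rule ext) (simp add: ustar_eq_def)
  ultimately show ?thesis by simp
qed

lemma E_lower: "exp (1::real) \<ge> 5/2"
  using exp_lower_Taylor_quadratic[of 1] by simp

lemma g_at_b: "ustar_eq (exp (-1)) < 0"
proof -
  define e where "e = exp (-1::real)"
  have epos: "0 < e" unfolding e_def by simp
  have "e * exp 1 = 1" unfolding e_def by (simp add: exp_minus)
  moreover have "e * (5/2) \<le> e * exp 1" using E_lower epos by (intro mult_left_mono) auto
  ultimately have "e < 1/2" by linarith
  have l: "ln (1 - e) \<le> - e" using ln_le_minus_one[of "1 - e"] \<open>e < 1/2\<close> by simp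
  have "(1 + e) / (2 * (1 - e)) < 1 + e" using \<open>e < 1/2\<close> epos by (simp add: divide_less_eq)
  moreover have "ustar_eq e = ln (1 - e) - 1 + (1 + e) / (2 * (1 - e))"
    using \<open>e < 1/2\<close> unfolding ustar_eq_def by (simp add: e_def field_simps)
  ultimately show ?thesis using l unfolding e_def by simp
qed

lemma g_at_a: "ustar_eq (exp (-6)) > 0"
proof -
  define e where "e = exp (-6::real)"
  define E where "E = exp (1::real)"
  have E: "E \<ge> 5/2" unfolding E_def by (rule E_lower)
  have epos: "0 < e" unfolding e_def by simp
  have E6: "exp (6::real) = E ^ 6" unfolding E_def by (simp flip: exp_of_nat_mult)
  have E2: "exp (2::real) = E ^ 2" unfolding E_def by (simp flip: exp_of_nat_mult)
  have "E ^ 6 \<ge> (5/2) ^ 6" using E by (intro power_mono) auto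
  moreover have "(5/2::real) ^ 6 = 15625/64" by (simp add: power_divide)
  ultimately have "exp (6::real) \<ge> 200" using E6 by simp
  moreover have "e = 1 / exp 6" unfolding e_def by (simp add: exp_minus inverse_eq_divide)
  ultimately have "e \<le> 1/200" by (simp add: frac_le)
  have "E ^ 2 \<ge> (5/2) ^ 2" using E by (intro power_mono) auto
  moreover have "(5/2::real) ^ 2 = 25/4" by (simp add: power_divide)
  ultimately have "exp (2::real) \<ge> 25/4" using E2 by simp
  hence "(199/200) * (25/4) \<le> (1 - e) * exp (2::real)" using \<open>e \<le> 1/200\<close>
    by (intro mult_mono) auto
  hence "(1 - e) * exp 2 > 6" by linarith
  hence A: "6 / exp (2::real) < 1 - e" using pos_divide_less_eq[of "exp (2::real)" 6 "1 - e"] by (simp add: algebra_simps)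
  have "exp (-2::real) = (6 / exp 2) / 6" by (simp add: exp_minus inverse_eq_divide)
  also have "\<dots> < (1 - e) / 6" using A by (intro divide_strict_right_mono) auto
  finally have "exp (-2) < (1 - e) / 6" .
  hence "ln (exp (-2::real)) < ln ((1 - e) / 6)" using \<open>e \<le> 1/200\<close>
    by (subst ln_less_cancel_iff) auto
  hence "-2 < ln ((1 - e) / 6)" by simp
  moreover have "(1 + e) / (1 - e) \<ge> 1" using \<open>e \<le> 1/200\<close> epos by simp
  moreover have "ustar_eq e = ln ((1 - e) / 6) - 1 + 3 * ((1 + e) / (1 - e))"
    using \<open>e \<le> 1/200\<close> unfolding ustar_eq_def by (simp add: e_def field_simps)
  ultimately have "ustar_eq e > 0" by linarith
  thus ?thesis unfolding e_def .
qed

lemma exists_root: "\<exists>u. 0 < u \<and> u < 1 \<and> ustar_eq u = 0"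
proof -
  have "\<exists>x. exp (-6) \<le> x \<and> x \<le> exp (-1) \<and> ustar_eq x = 0"
  proof (rule IVT2)
    show "ustar_eq (exp (-1)) \<le> 0" using g_at_b by simp
    show "0 \<le> ustar_eq (exp (-6))" using g_at_a by simp
    show "exp (-6) \<le> exp (-1::real)" by simp
    show "\<forall>x. exp (-6) \<le> x \<and> x \<le> exp (-1) \<longrightarrow> isCont ustar_eq x"
    proof (intro allI impI)
      fix x :: real assume "exp (-6) \<le> x \<and> x \<le> exp (-1)"
      moreover have "0 < exp (-6::real)" "exp (-1::real) < 1" by auto
      ultimately have "0 < x" "x < 1" by linarith+
      thus "isCont ustar_eq x" by (rule ustar_cont)
    qed
  qed
  moreover have "0 < exp (-6::real)" "exp (-1::real) < 1" by auto
  ultimately show ?thesis by (meson less_le_trans le_less_trans)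
qed

theorem lemma3p5:
  shows "(\<exists>!u. 0 < u \<and> u < 1 \<and> ustar_eq u = 0) \<and>
         (\<forall>\<delta> u. 0 < \<delta> \<and> \<delta> < 1/2 \<and> u_star \<le> u \<and> u \<le> 1 \<longrightarrow> F \<delta> u \<ge> 0)"
proof -
  obtain u0 where u0: "0 < u0" "u0 < 1" "ustar_eq u0 = 0" using exists_root by blast
  have uniq: "u = u0" if "0 < u" "u < 1" "ustar_eq u = 0" for u
  proof (cases u u0 rule: linorder_cases)
    case less thus ?thesis using no_two_roots[of u u0] that u0 by simp
  next
    case greater thus ?thesis using no_two_roots[of u0 u] that u0 by simp
  qed simp
  have ex1: "\<exists>!u. 0 < u \<and> u < 1 \<and> ustar_eq u = 0" using u0 uniq by blast
  have us: "u_star = u0" unfolding u_star_def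
    by (rule the1_equality[OF ex1]) (use u0 in simp)
  have "F \<delta> u \<ge> 0" if "0 < \<delta>" "\<delta> < 1/2" "u_star \<le> u" "u \<le> 1" for \<delta> u
  proof -
    have h0: "F \<delta> u0 \<ge> 0" using tangent_ge[of u0 \<delta>] u0 by simp
    have "u = u0 \<or> u = 1 \<or> (u0 < u \<and> u < 1)" using that us by auto
    then consider "u = u0" | "u = 1" | "u0 < u \<and> u < 1" by blast
    thus ?thesis
    proof cases
      case 1 thus ?thesis using h0 by simp
    next
      case 2 thus ?thesis unfolding F_def by simp
    next
      case 3 thus ?thesis using key[of u0 u \<delta>] h0 u0 that by simp
    qed
  qed
  thus ?thesis using ex1 by blast
qed

end
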